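(* Under the hypotheses: $(\boldsymbol\Sigma,\sigma)$ is a primitive Markov subshift on a countable alphabet with associated $\mathbb F$, $K_0$; $A:\boldsymbol\Sigma\to\mathbb R$ is bounded above, locally H\"older continuous with constant $H_A$, and $\inf A|_{\bigcup_{i\in\mathbb F}[i]}>-\infty$. Define $$u_A(\mathbf x)=\sup\{S_k(A-\beta_A)(\mathbf y):k\ge0,\ \mathbf y\in\boldsymbol\Sigma,\ \sigma^k(\mathbf y)=\mathbf x\}.$$ Then for all $\mathbf x\in\boldsymbol\Sigma$, $$0\le u_A(\mathbf x)\le\max\Big\{\mathrm{Var}(A)+K_0\big(\sup A-\inf A|_{\bigcup_{i\in\mathbb F}[i]}\big),\ K_0(\sup A-\beta_A)\Big\},$$ $A+u_A-u_A\circ\sigma\le\beta_A$, and $\mathrm{Var}_k(u_A)\le\frac{H_A}{1-\lambda}\lambda^k$ for all $k\ge1$.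
   Context: Let $\mathbf M:\mathbb Z_+\times\mathbb Z_+\to\{0,1\}$ be a transition matrix. Put $\mathcal B_0=\{i:\mathbf M(i,j)=1\text{ for some }j\}$, $\mathcal B_n=\{i:\mathbf M(i,j)=1\text{ for some }j\in\mathcal B_{n-1}\}$. $\mathbf M$ is primitive if there exist $\mathbb F\subseteq\mathbb Z_+$ and an integer $K_0\ge0$ such that for all $i,j\in\bigcap_{n\ge0}\mathcal B_n$ there are $\ell_1,\dots,\ell_{K_0}\in\mathbb F$ with $\mathbf M(i,\ell_1)\mathbf M(\ell_1,\ell_2)\cdots\mathbf M(\ell_{K_0},j)=1$. $\boldsymbol\Sigma=\{\mathbf x\in\mathbb Z_+^{\mathbb Z_+}:\mathbf M(x_j,x_{j+1})=1\ \forall j\}$ with metric $d(\mathbf x,\mathbf y)=\lambda^{\min\{j:x_j\neq y_j\}}$, $\lambda\in(0,1)$ fixed; $\sigma$ the left shift; $[i]=\{\mathbf x:x_0=i\}$. $\mathcal M_\sigma$ = $\sigma$-invariant Borel probabilities; $\beta_A=\sup_{\mu\in\mathcal M_\sigma}\int A\,d\mu$. $S_kA=\sum_{j=0}^{k-1}A\circ\sigma^j$, $S_0A=0$. $\mathrm{Var}_k(A)=\sup\{A(\mathbf x)-A(\mathbf y):d(\mathbf x,\mathbf y)\le\lambda^k\}$; $\mathrm{Var}(A)=\sum_{k\ge1}\mathrm{Var}_k(A)$; $A$ is locally H\"older continuous with constant $H_A>0$ if $\mathrm{Var}_k(A)\le H_A\lambda^k$ for all $k\ge1$. *)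

theory Defs
  imports "HOL-Analysis.Analysis" "HOL-Probability.Probability"
begin

type_synonym seq = "nat \<Rightarrow> nat"

text \<open>Transition matrix: Mt i j means M(i,j) = 1.\<close>

fun Bset :: "(nat \<Rightarrow> nat \<Rightarrow> bool) \<Rightarrow> nat \<Rightarrow> nat set" where
  "Bset Mt 0 = {i. \<exists>j. Mt i j}"
| "Bset Mt (Suc n) = {i. \<exists>j\<in>Bset Mt n. Mt i j}"

definition core :: "(nat \<Rightarrow> nat \<Rightarrow> bool) \<Rightarrow> nat set" where
  "core Mt = (\<Inter>n. Bset Mt n)"

definition primitive :: "(nat \<Rightarrow> nat \<Rightarrow> bool) \<Rightarrow> nat set \<Rightarrow> nat \<Rightarrow> bool" where
  "primitive Mt F K0 \<longleftrightarrow>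
     (\<forall>i\<in>core Mt. \<forall>j\<in>core Mt. \<exists>l :: nat \<Rightarrow> nat.
        l 0 = i \<and> l (Suc K0) = j \<and> (\<forall>m\<in>{1..K0}. l m \<in> F) \<and>
        (\<forall>m\<le>K0. Mt (l m) (l (Suc m))))"

definition Sigma :: "(nat \<Rightarrow> nat \<Rightarrow> bool) \<Rightarrow> seq set" where
  "Sigma Mt = {x. \<forall>j. Mt (x j) (x (Suc j))}"

definition shift :: "seq \<Rightarrow> seq" where
  "shift x = (\<lambda>j. x (Suc j))"

definition dist_sh :: "real \<Rightarrow> seq \<Rightarrow> seq \<Rightarrow> real" where
  "dist_sh lam x y = (if x = y then 0 else lam ^ (LEAST j. x j \<noteq> y j))"

definition Ssum :: "nat \<Rightarrow> (seq \<Rightarrow> real) \<Rightarrow> seq \<Rightarrow> real" where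
  "Ssum k A x = (\<Sum>j<k. A ((shift ^^ j) x))"

definition Var_k :: "(nat \<Rightarrow> nat \<Rightarrow> bool) \<Rightarrow> real \<Rightarrow> nat \<Rightarrow> (seq \<Rightarrow> real) \<Rightarrow> real" where
  "Var_k Mt lam k A = Sup {A x - A y | x y. x \<in> Sigma Mt \<and> y \<in> Sigma Mt \<and> dist_sh lam x y \<le> lam ^ k}"

definition Var :: "(nat \<Rightarrow> nat \<Rightarrow> bool) \<Rightarrow> real \<Rightarrow> (seq \<Rightarrow> real) \<Rightarrow> real" where
  "Var Mt lam A = (\<Sum>k. Var_k Mt lam (Suc k) A)"

text \<open>Borel sigma-algebra on Sigma: the topology of d on Sigma is the subspace
  product topology (nat discrete), so Borel sets are those of restrict_space borel.\<close>
definition Minv :: "(nat \<Rightarrow> nat \<Rightarrow> bool) \<Rightarrow> seq measure set" where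
  "Minv Mt = {\<mu>. prob_space \<mu> \<and> sets \<mu> = sets (restrict_space borel (Sigma Mt)) \<and>
      (\<forall>B\<in>sets \<mu>. emeasure \<mu> (shift -` B \<inter> space \<mu>) = emeasure \<mu> B)}"

text \<open>beta_A = sup of the integrals; since A is bounded above, integrals lie in
  [-infinity, sup A], and the supremum is attained over measures for which A is
  integrable (the -infinity values do not contribute).\<close>
definition beta :: "(nat \<Rightarrow> nat \<Rightarrow> bool) \<Rightarrow> (seq \<Rightarrow> real) \<Rightarrow> real" where
  "beta Mt A = Sup {integral\<^sup>L \<mu> A | \<mu>. \<mu> \<in> Minv Mt \<and> integrable \<mu> A}"

text \<open>u_A as an extended real (so its finiteness is part of the claim).\<close>
definition uA :: "(nat \<Rightarrow> nat \<Rightarrow> bool) \<Rightarrow> (seq \<Rightarrow> real) \<Rightarrow> seq \<Rightarrow> ereal" where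
  "uA Mt A x = Sup {ereal (Ssum k (\<lambda>z. A z - beta Mt A) y) | k y.
      y \<in> Sigma Mt \<and> (shift ^^ k) y = x}"

end

theory Submission imports Defs begin

lemma funpow_shift: "(shift ^^ j) y = (\<lambda>i. y (i + j))"
  by (induction j) (auto simp: shift_def)

lemma Sigma_shift: "y \<in> Sigma Mt \<Longrightarrow> (\<lambda>i. y (i + j)) \<in> Sigma Mt"
  by (simp add: Sigma_def)

lemma Sigma_core: assumes "x \<in> Sigma Mt" shows "x j \<in> core Mt"
proof -
  have "x j \<in> Bset Mt n" for n
  proof (induction n arbitrary: j)
    case 0 then show ?case using assms by (auto simp: Sigma_def)
  next
    case (Suc n) then show ?case using assms by (auto simp: Sigma_def)
  qed
  then show ?thesis by (auto simp: core_def)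
qed

lemma agree_dist: assumes "0<lam" "lam<1" "\<forall>i<m. x i = y i" shows "dist_sh lam x y \<le> lam ^ m"
proof (cases "x = y")
  case True then show ?thesis using assms by (simp add: dist_sh_def)
next
  case False
  then obtain j where "x j \<noteq> y j" by auto
  hence "x (LEAST j. x j \<noteq> y j) \<noteq> y (LEAST j. x j \<noteq> y j)" by (rule LeastI)
  hence "m \<le> (LEAST j. x j \<noteq> y j)" using assms(3) by (metis not_le)
  hence "lam ^ (LEAST j. x j \<noteq> y j) \<le> lam ^ m" using assms by (intro power_decreasing) auto
  thus ?thesis using False by (simp add: dist_sh_def)
qed

lemma dist_agree: assumes "0<lam" "lam<1" "dist_sh lam x y \<le> lam ^ k" "i < k" shows "x i = y i"
proof (cases "x = y")
  case True then show ?thesis by simp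
next
  case False
  then have "lam ^ (LEAST j. x j \<noteq> y j) \<le> lam ^ k" using assms by (simp add: dist_sh_def)
  then have "k \<le> (LEAST j. x j \<noteq> y j)" using assms by simp
  then have "i < (LEAST j. x j \<noteq> y j)" using assms(4) by simp
  from not_less_Least[OF this] show ?thesis by simp
qed

locale setting =
  fixes Mt :: "nat \<Rightarrow> nat \<Rightarrow> bool" and lam :: real and A :: "seq \<Rightarrow> real" and H :: real
  assumes lam0: "0 < lam" and lam1: "lam < 1" and H_pos: "H > 0"
    and holder: "\<And>k x y. k \<ge> 1 \<Longrightarrow> x \<in> Sigma Mt \<Longrightarrow> y \<in> Sigma Mt \<Longrightarrow>
                   dist_sh lam x y \<le> lam ^ k \<Longrightarrow> A x - A y \<le> H * lam ^ k"
begin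

lemma Vk_bdd: "k \<ge> 1 \<Longrightarrow> bdd_above {A x - A y | x y. x \<in> Sigma Mt \<and> y \<in> Sigma Mt \<and> dist_sh lam x y \<le> lam ^ k}"
  by (rule bdd_aboveI[of _ "H * lam ^ k"]) (auto intro: holder)

lemma Vk_upper: "k \<ge> 1 \<Longrightarrow> x \<in> Sigma Mt \<Longrightarrow> y \<in> Sigma Mt \<Longrightarrow> dist_sh lam x y \<le> lam ^ k
   \<Longrightarrow> A x - A y \<le> Var_k Mt lam k A"
  unfolding Var_k_def by (rule cSup_upper[OF _ Vk_bdd]) auto

lemma Vk_nonneg: assumes "k \<ge> 1" "z \<in> Sigma Mt" shows "0 \<le> Var_k Mt lam k A"
proof -
  have "dist_sh lam z z \<le> lam ^ k" using lam0 by (simp add: dist_sh_def)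
  from Vk_upper[OF assms(1,2,2) this] show ?thesis by simp
qed

lemma Vk_le: assumes "k \<ge> 1" "z \<in> Sigma Mt" shows "Var_k Mt lam k A \<le> H * lam ^ k"
  unfolding Var_k_def
proof (rule cSup_least)
  have "dist_sh lam z z \<le> lam ^ k" using lam0 by (simp add: dist_sh_def)
  then show "{A x - A y | x y. x \<in> Sigma Mt \<and> y \<in> Sigma Mt \<and> dist_sh lam x y \<le> lam ^ k} \<noteq> {}"
    using assms by blast
qed (auto intro: holder assms)

lemma Var_summable: assumes "z \<in> Sigma Mt" shows "summable (\<lambda>k. Var_k Mt lam (Suc k) A)"
proof (rule summable_comparison_test')
  show "summable (\<lambda>k. H * lam ^ Suc k)" using lam0 lam1
    by (intro summable_mult summable_geometric) auto
  show "norm (Var_k Mt lam (Suc k) A) \<le> H * lam ^ Suc k" for k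
    using Vk_nonneg[OF _ assms, of "Suc k"] Vk_le[OF _ assms, of "Suc k"] by simp
qed

lemma Var_partial: assumes "z \<in> Sigma Mt" shows "(\<Sum>i<m. Var_k Mt lam (Suc i) A) \<le> Var Mt lam A"
  unfolding Var_def
  by (rule sum_le_suminf[OF Var_summable[OF assms]]) (auto intro: Vk_nonneg[OF _ assms])

lemma Var_nonneg: assumes "z \<in> Sigma Mt" shows "0 \<le> Var Mt lam A"
  using Var_partial[OF assms, of 0] by simp

lemma A_cont: "continuous_on (Sigma Mt) A"
  unfolding continuous_on_topological
proof (intro ballI allI impI)
  fix x B assume x: "x \<in> Sigma Mt" and B: "open B" "A x \<in> B"
  obtain e where e: "e > 0" "ball (A x) e \<subseteq> B" using openE[OF B] by metis
  obtain n where n: "lam ^ n < e / H" using real_arch_pow_inv[of "e/H" lam] e H_pos lam1 by auto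
  define k where "k = Suc n"
  have "lam ^ k \<le> lam ^ n" unfolding k_def using lam0 lam1 by simp
  with n have "H * lam ^ k < e" using H_pos
    by (smt (verit, best) mult_left_mono pos_less_divide_eq mult.commute)
  note k = this
  define U where "U = (\<Inter>i<k. (\<lambda>y. y i) -` {x i})"
  have "open U" unfolding U_def
    by (intro open_INT finite_lessThan ballI open_vimage) (auto intro: discrete_topology_class.open_discrete)
  moreover have "x \<in> U" by (simp add: U_def)
  moreover have "A y \<in> B" if "y \<in> Sigma Mt" "y \<in> U" for y
  proof -
    have ag: "\<forall>i<k. y i = x i" "\<forall>i<k. x i = y i" using that by (auto simp: U_def)
    have "A y - A x \<le> H * lam ^ k" "A x - A y \<le> H * lam ^ k"
      using holder[of k y x] holder[of k x y] agree_dist[OF lam0 lam1 ag(1)] agree_dist[OF lam0 lam1 ag(2)]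
        x that by (auto simp: k_def)
    then have "dist (A y) (A x) < e" using k by (simp add: dist_real_def abs_le_iff)
    then show ?thesis using e by (auto simp: dist_commute)
  qed
  ultimately show "\<exists>U. open U \<and> x \<in> U \<and> (\<forall>y\<in>Sigma Mt. y \<in> U \<longrightarrow> A y \<in> B)" by blast
qed

lemma A_meas: "A \<in> borel_measurable (restrict_space borel (Sigma Mt))"
  by (rule borel_measurable_continuous_on_restrict[OF A_cont])


end

lemma card_rot: assumes "n > 0"
  shows "card ({..<n} \<inter> {j. Q (Suc j mod n)}) = card ({..<n} \<inter> {j. Q j})"
proof (rule bij_betw_same_card[of "\<lambda>j. Suc j mod n"], rule bij_betw_imageI)
  show "inj_on (\<lambda>j. Suc j mod n) ({..<n} \<inter> {j. Q (Suc j mod n)})"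
    by (auto simp: inj_on_def mod_Suc split: if_splits)
  show "(\<lambda>j. Suc j mod n) ` ({..<n} \<inter> {j. Q (Suc j mod n)}) = {..<n} \<inter> {j. Q j}"
  proof
    show "(\<lambda>j. Suc j mod n) ` ({..<n} \<inter> {j. Q (Suc j mod n)}) \<subseteq> {..<n} \<inter> {j. Q j}"
      using assms by auto
    show "{..<n} \<inter> {j. Q j} \<subseteq> (\<lambda>j. Suc j mod n) ` ({..<n} \<inter> {j. Q (Suc j mod n)})"
    proof
      fix j assume j: "j \<in> {..<n} \<inter> {j. Q j}"
      have e: "Suc ((j + n - 1) mod n) mod n = j"
        using j assms by (simp add: mod_Suc_eq)
      show "j \<in> (\<lambda>j. Suc j mod n) ` ({..<n} \<inter> {j. Q (Suc j mod n)})"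
        using j assms e by (intro image_eqI[of _ _ "(j + n - 1) mod n"]) auto
    qed
  qed
qed

lemma periodic_p: assumes "(shift ^^ n) p = p" shows "p (i + n * q) = p i"
proof (induction q)
  case (Suc q)
  have "p (i + n * q + n) = p (i + n * q)"
    using fun_cong[OF assms, of "i + n * q"] by (simp add: funpow_shift)
  then show ?case using Suc by (simp add: algebra_simps)
qed simp

lemma shift_meas: "shift \<in> measurable (restrict_space borel (Sigma Mt)) (restrict_space borel (Sigma Mt))"
proof (rule measurable_restrict_space2)
  show "shift \<in> space (restrict_space borel (Sigma Mt)) \<rightarrow> Sigma Mt"
    by (auto simp: space_restrict_space Sigma_def shift_def)
  have "continuous_on (Sigma Mt) shift" unfolding shift_def
    by (intro continuous_on_coordinatewise_then_product continuous_on_subset[OF continuous_on_product_coordinates]) auto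
  then show "shift \<in> borel_measurable (restrict_space borel (Sigma Mt))"
    by (rule borel_measurable_continuous_on_restrict)
qed

context setting begin

lemma periodic_in: assumes p: "p \<in> Sigma Mt" and n: "n > 0" and per: "(shift ^^ n) p = p"
  shows "(\<Sum>j<n. A ((shift ^^ j) p)) / n \<in> {integral\<^sup>L \<mu> A | \<mu>. \<mu> \<in> Minv Mt \<and> integrable \<mu> A}"
proof -
  define N where "N = restrict_space borel (Sigma Mt)"
  define P where "P = pmf_of_set {..<n}"
  define g where "g = (\<lambda>j. (shift ^^ j) p)"
  define \<mu> where "\<mu> = distr (measure_pmf P) N g"
  have gS: "g j \<in> Sigma Mt" for j unfolding g_def funpow_shift using Sigma_shift[OF p] by simp
  have spN: "space N = Sigma Mt" by (simp add: N_def space_restrict_space)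
  have gm: "g \<in> measurable (measure_pmf P) N" using gS spN by simp
  have gper: "g j = g (j mod n)" for j
  proof -
    have "p (i + j) = p (i + j mod n)" for i
      using periodic_p[OF per, of "i + j mod n" "j div n"] by (simp add: algebra_simps)
    then show ?thesis by (simp add: g_def funpow_shift)
  qed
  have gsuc: "shift (g j) = g (Suc j)" for j by (simp add: g_def)
  have spmu: "space \<mu> = Sigma Mt" by (simp add: \<mu>_def spN)
  have setP: "set_pmf P = {..<n}" using n unfolding P_def by (subst set_pmf_of_set) auto
  have "\<mu> \<in> Minv Mt"
    unfolding Minv_def
  proof (intro CollectI conjI ballI)
    show "prob_space \<mu>" unfolding \<mu>_def by (rule measure_pmf.prob_space_distr[OF gm])
    show "sets \<mu> = sets (restrict_space borel (Sigma Mt))" by (simp add: \<mu>_def N_def)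
    fix B assume B: "B \<in> sets \<mu>"
    then have BN: "B \<in> sets N" by (simp add: \<mu>_def)
    have sB: "shift -` B \<inter> space \<mu> \<in> sets N"
      using measurable_sets[OF shift_meas BN[unfolded N_def]] spmu spN by (simp add: N_def)
    have "emeasure \<mu> (shift -` B \<inter> space \<mu>) = emeasure P (g -` (shift -` B \<inter> space \<mu>) \<inter> space (measure_pmf P))"
      unfolding \<mu>_def by (rule emeasure_distr[OF gm sB[unfolded \<mu>_def]])
    also have "\<dots> = card ({..<n} \<inter> {j. g (Suc j mod n) \<in> B}) / card {..<n}"
    proof -
      have "g -` (shift -` B \<inter> space \<mu>) \<inter> space (measure_pmf P) = {j. g (Suc j mod n) \<in> B}"
        using gS spmu gsuc gper by (auto simp del: mod_Suc)
      then show ?thesis unfolding P_def using n by (subst emeasure_pmf_of_set) auto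
    qed
    also have "\<dots> = card ({..<n} \<inter> {j. g j \<in> B}) / card {..<n}"
      using card_rot[OF n, of "\<lambda>j. g j \<in> B"] by simp
    also have "\<dots> = emeasure P (g -` B \<inter> space (measure_pmf P))"
      unfolding P_def using n by (subst emeasure_pmf_of_set) (auto simp: vimage_def)
    also have "\<dots> = emeasure \<mu> B"
      unfolding \<mu>_def by (rule emeasure_distr[OF gm BN, symmetric])
    finally show "emeasure \<mu> (shift -` B \<inter> space \<mu>) = emeasure \<mu> B" .
  qed
  moreover have AN: "A \<in> borel_measurable N" unfolding N_def by (rule A_meas)
  moreover have "integrable \<mu> A"
    unfolding \<mu>_def using integrable_distr_eq[OF gm AN] integrable_measure_pmf_finite[of P] setP by simp
  moreover have "integral\<^sup>L \<mu> A = (\<Sum>j<n. A ((shift ^^ j) p)) / n"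
  proof -
    have "integral\<^sup>L \<mu> A = integral\<^sup>L (measure_pmf P) (\<lambda>j. A (g j))"
      unfolding \<mu>_def by (rule integral_distr[OF gm AN])
    also have "\<dots> = (\<Sum>j<n. A (g j)) / n" unfolding P_def using n by (subst integral_pmf_of_set) auto
    finally show ?thesis by (simp add: g_def)
  qed
  ultimately show ?thesis by (metis (mono_tags, lifting) mem_Collect_eq)
qed

end

lemma periodic_constr: assumes prim: "primitive Mt F K0" and y: "y \<in> Sigma Mt" and m: "m \<ge> 1"
  shows "\<exists>p\<in>Sigma Mt. (shift ^^ (m + K0)) p = p \<and> (\<forall>j<m. p j = y j) \<and> (\<forall>i<K0. p (m + i) \<in> F)"
proof -
  obtain l where l0: "l 0 = y (m - 1)" and lK: "l (Suc K0) = y 0" and lF: "\<forall>i\<in>{1..K0}. l i \<in> F"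
    and lM: "\<forall>i\<le>K0. Mt (l i) (l (Suc i))"
    using prim Sigma_core[OF y] unfolding primitive_def by blast
  define n where "n = m + K0"
  define q where "q r = (if r < m then y r else l (r - m + 1))" for r
  define p where "p i = q (i mod n)" for i
  have yM: "Mt (y j) (y (Suc j))" for j using y by (simp add: Sigma_def)
  have n0: "n > 0" using m by (simp add: n_def)
  have step: "Mt (q r) (q (if Suc r = n then 0 else Suc r))" if r: "r < n" for r
  proof (cases "Suc r = n")
    case True
    show ?thesis
    proof (cases "r < m")
      case True
      with \<open>Suc r = n\<close> have "K0 = 0" "r = m - 1" by (auto simp: n_def)
      then show ?thesis using lM l0 lK True \<open>Suc r = n\<close> m by (simp add: q_def)
    next
      case False
      with \<open>Suc r = n\<close> have "r - m + 1 = K0" by (auto simp: n_def)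
      then show ?thesis using lM lK False \<open>Suc r = n\<close> m by (auto simp: q_def)
    qed
  next
    case False
    show ?thesis
    proof (cases "Suc r < m")
      case True then show ?thesis using False yM by (simp add: q_def)
    next
      case F2: False
      show ?thesis
      proof (cases "r < m")
        case True
        with F2 have "r = m - 1" by simp
        then show ?thesis using False lM[rule_format, of 0] l0 True F2 m by (simp add: q_def)
      next
        case F3: False
        then have "r - m + 1 \<le> K0" "Suc r - m + 1 = Suc (r - m + 1)" using r False by (auto simp: n_def)
        then show ?thesis using lM False F2 F3 by (simp add: q_def)
      qed
    qed
  qed
  have "p \<in> Sigma Mt" unfolding Sigma_def
  proof (intro CollectI allI)
    fix i
    show "Mt (p i) (p (Suc i))" using step[of "i mod n"] n0 unfolding p_def by (simp add: mod_Suc)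
  qed
  moreover have "(shift ^^ (m + K0)) p = p"
    by (rule ext) (simp add: funpow_shift p_def n_def[symmetric])
  moreover have "\<forall>j<m. p j = y j" by (simp add: p_def q_def n_def)
  moreover have "\<forall>i<K0. p (m + i) \<in> F" using lF by (auto simp: p_def q_def n_def)
  ultimately show ?thesis by blast
qed

lemma sum_rev_Suc: "(\<Sum>j<(m::nat). f (m - j)) = (\<Sum>i<m. f (Suc i) :: 'a::comm_monoid_add)"
proof (induction m)
  case (Suc m)
  have "(\<Sum>j<Suc m. f (Suc m - j)) = f (Suc m) + (\<Sum>j<m. f (m - j))"
    by (subst sum.lessThan_Suc_shift) simp
  also have "\<dots> = (\<Sum>i<Suc m. f (Suc i))" using Suc by (simp add: add.commute)
  finally show ?case .
qed simp

lemma sum_split_add: "(\<Sum>j<(m::nat) + k. f j) = (\<Sum>j<m. f j) + (\<Sum>i<k. f (m + i) :: 'a::comm_monoid_add)"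
  by (induction k) (auto simp: add.assoc)

lemma Ssum_Suc: "Ssum (Suc k) f y = Ssum k f y + f ((shift ^^ k) y)"
  by (simp add: Ssum_def)

context setting begin

lemma int_le_sup: assumes mu: "\<mu> \<in> Minv Mt" and int: "integrable \<mu> A" and bdd: "bdd_above (A ` Sigma Mt)"
  shows "integral\<^sup>L \<mu> A \<le> Sup (A ` Sigma Mt)"
proof -
  have ps: "prob_space \<mu>" and se: "sets \<mu> = sets (restrict_space borel (Sigma Mt))" using mu by (auto simp: Minv_def)
  have sp: "space \<mu> = Sigma Mt" using sets_eq_imp_space_eq[OF se] by (simp add: space_restrict_space)
  have "integral\<^sup>L \<mu> A \<le> integral\<^sup>L \<mu> (\<lambda>_. Sup (A ` Sigma Mt))"
    using int ps sp bdd by (intro integral_mono) (auto intro: cSup_upper finite_measure.integrable_const prob_space.finite_measure)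
  also have "\<dots> = Sup (A ` Sigma Mt)" using ps by (simp add: prob_space.prob_space)
  finally show ?thesis .
qed

lemma beta_ge: assumes "v \<in> {integral\<^sup>L \<mu> A | \<mu>. \<mu> \<in> Minv Mt \<and> integrable \<mu> A}" "bdd_above (A ` Sigma Mt)"
  shows "v \<le> beta Mt A"
  unfolding beta_def
  by (rule cSup_upper[OF assms(1)], rule bdd_aboveI[of _ "Sup (A ` Sigma Mt)"]) (auto intro: int_le_sup assms(2))

lemma beta_le_sup: assumes "v \<in> {integral\<^sup>L \<mu> A | \<mu>. \<mu> \<in> Minv Mt \<and> integrable \<mu> A}" "bdd_above (A ` Sigma Mt)"
  shows "beta Mt A \<le> Sup (A ` Sigma Mt)"
  unfolding beta_def using assms by (intro cSup_least) (auto intro: int_le_sup)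

lemma bound_Ssum:
  assumes prim: "primitive Mt F K0" and bdd: "bdd_above (A ` Sigma Mt)"
    and bddF: "bdd_below (A ` {x \<in> Sigma Mt. x 0 \<in> F})" and y: "y \<in> Sigma Mt" and m: "m \<ge> 1"
  shows "Ssum m (\<lambda>z. A z - beta Mt A) y \<le> Var Mt lam A + K0 * (beta Mt A - Inf (A ` {x \<in> Sigma Mt. x 0 \<in> F}))"
proof -
  define b where "b = beta Mt A"
  define IF where "IF = Inf (A ` {x \<in> Sigma Mt. x 0 \<in> F})"
  obtain p where p: "p \<in> Sigma Mt" "(shift ^^ (m + K0)) p = p" "\<forall>j<m. p j = y j" "\<forall>i<K0. p (m + i) \<in> F"
    using periodic_constr[OF prim y m] by blast
  have "(\<Sum>j<m+K0. A ((shift ^^ j) p)) / (m + K0) \<le> b"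
    unfolding b_def using m by (intro beta_ge[OF periodic_in[OF p(1) _ p(2)] bdd]) auto
  then have tot: "(\<Sum>j<m+K0. A ((shift ^^ j) p)) \<le> (m + K0) * b"
    using m by (simp add: divide_le_eq mult.commute)
  have Fpart: "K0 * IF \<le> (\<Sum>i<K0. A ((shift ^^ (m + i)) p))"
  proof -
    have "real (card {..<K0}) * IF \<le> (\<Sum>i<K0. A ((shift ^^ (m + i)) p))"
    proof (rule sum_bounded_below)
      fix i assume "i \<in> {..<K0}"
      then have "(shift ^^ (m + i)) p \<in> {x \<in> Sigma Mt. x 0 \<in> F}"
        using p(4) Sigma_shift[OF p(1), of "m + i"] by (simp add: funpow_shift)
      then show "IF \<le> A ((shift ^^ (m + i)) p)" unfolding IF_def by (rule cInf_lower[OF imageI bddF])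
    qed
    then show ?thesis by simp
  qed
  have Vpart: "(\<Sum>j<m. A ((shift ^^ j) y) - A ((shift ^^ j) p)) \<le> Var Mt lam A"
  proof -
    have "(\<Sum>j<m. A ((shift ^^ j) y) - A ((shift ^^ j) p)) \<le> (\<Sum>j<m. Var_k Mt lam (m - j) A)"
    proof (rule sum_mono)
      fix j assume j: "j \<in> {..<m}"
      have "\<forall>i<m - j. (shift ^^ j) y i = (shift ^^ j) p i" using p(3) by (auto simp: funpow_shift)
      then have "dist_sh lam ((shift ^^ j) y) ((shift ^^ j) p) \<le> lam ^ (m - j)" by (rule agree_dist[OF lam0 lam1])
      then show "A ((shift ^^ j) y) - A ((shift ^^ j) p) \<le> Var_k Mt lam (m - j) A"
        using j Sigma_shift[OF y] Sigma_shift[OF p(1)] by (intro Vk_upper) (auto simp: funpow_shift)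
    qed
    also have "\<dots> = (\<Sum>i<m. Var_k Mt lam (Suc i) A)" by (rule sum_rev_Suc)
    also have "\<dots> \<le> Var Mt lam A" by (rule Var_partial[OF y])
    finally show ?thesis .
  qed
  have "Ssum m (\<lambda>z. A z - b) y = (\<Sum>j<m. A ((shift ^^ j) y) - A ((shift ^^ j) p)) + (\<Sum>j<m. A ((shift ^^ j) p)) - m * b"
    by (simp add: Ssum_def sum_subtractf)
  also have "(\<Sum>j<m. A ((shift ^^ j) p)) = (\<Sum>j<m+K0. A ((shift ^^ j) p)) - (\<Sum>i<K0. A ((shift ^^ (m + i)) p))"
    by (simp add: sum_split_add)
  finally have "Ssum m (\<lambda>z. A z - b) y \<le> Var Mt lam A + ((m + K0) * b - K0 * IF) - m * b"
    using Vpart tot Fpart by linarith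
  then show ?thesis unfolding b_def[symmetric] IF_def[symmetric] by (simp add: algebra_simps)
qed

lemma shift_bound:
  assumes x': "x' \<in> Sigma Mt" and k: "k \<ge> 1" and ag: "\<forall>i<k. x i = x' i" and y: "y \<in> Sigma Mt"
    and ym: "(shift ^^ m) y = x"
  shows "\<exists>y'\<in>Sigma Mt. (shift ^^ m) y' = x' \<and>
     Ssum m (\<lambda>z. A z - b) y \<le> Ssum m (\<lambda>z. A z - b) y' + H / (1 - lam) * lam ^ k"
proof -
  define y' where "y' i = (if i < m then y i else x' (i - m))" for i
  have yx: "y (i + m) = x i" for i using fun_cong[OF ym, of i] by (simp add: funpow_shift)
  have "y' \<in> Sigma Mt" unfolding Sigma_def
  proof (intro CollectI allI)
    fix i
    show "Mt (y' i) (y' (Suc i))"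
    proof (cases "Suc i < m")
      case True then show ?thesis using y by (simp add: y'_def Sigma_def)
    next
      case False
      show ?thesis
      proof (cases "i < m")
        case True
        with False have "Suc i = m" by simp
        moreover have "x' 0 = y m" using ag k yx[of 0] by simp
        moreover have "Mt (y i) (y (Suc i))" using y by (simp add: Sigma_def)
        ultimately show ?thesis using True by (simp add: y'_def)
      next
        case False
        then have "Suc i - m = Suc (i - m)" by simp
        then show ?thesis using False x' by (simp add: y'_def Sigma_def)
      qed
    qed
  qed
  moreover have "(shift ^^ m) y' = x'" by (rule ext) (simp add: funpow_shift y'_def)
  moreover have "Ssum m (\<lambda>z. A z - b) y \<le> Ssum m (\<lambda>z. A z - b) y' + H / (1 - lam) * lam ^ k"
  proof -
    have "Ssum m (\<lambda>z. A z - b) y - Ssum m (\<lambda>z. A z - b) y' = (\<Sum>j<m. A ((shift ^^ j) y) - A ((shift ^^ j) y'))"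
      by (simp add: Ssum_def sum_subtractf)
    also have "\<dots> \<le> (\<Sum>j<m. H * lam ^ k * lam ^ (m - j))"
    proof (rule sum_mono)
      fix j assume j: "j \<in> {..<m}"
      have "\<forall>i<k + (m - j). (shift ^^ j) y i = (shift ^^ j) y' i"
      proof (intro allI impI)
        fix i assume i: "i < k + (m - j)"
        show "(shift ^^ j) y i = (shift ^^ j) y' i"
        proof (cases "i + j < m")
          case True then show ?thesis by (simp add: funpow_shift y'_def)
        next
          case False
          then have "y (i + j) = x (i + j - m)" using yx[of "i + j - m"] by simp
          moreover have "x (i + j - m) = x' (i + j - m)" using ag i j False by auto
          ultimately show ?thesis using False by (simp add: funpow_shift y'_def)
        qed
      qed
      then have "dist_sh lam ((shift ^^ j) y) ((shift ^^ j) y') \<le> lam ^ (k + (m - j))"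
        by (rule agree_dist[OF lam0 lam1])
      then have "A ((shift ^^ j) y) - A ((shift ^^ j) y') \<le> H * lam ^ (k + (m - j))"
        using k Sigma_shift[OF y] Sigma_shift[OF \<open>y' \<in> Sigma Mt\<close>] by (intro holder) (auto simp: funpow_shift)
      then show "A ((shift ^^ j) y) - A ((shift ^^ j) y') \<le> H * lam ^ k * lam ^ (m - j)"
        by (simp add: power_add mult.assoc)
    qed
    also have "\<dots> = H * lam ^ k * (\<Sum>i<m. lam ^ Suc i)"
      by (simp add: sum_distrib_left[symmetric] sum_rev_Suc[of "\<lambda>i. lam ^ i"])
    also have "\<dots> \<le> H * lam ^ k * (1 / (1 - lam))"
    proof (rule mult_left_mono)
      have "(\<Sum>i<m. lam ^ Suc i) \<le> (\<Sum>i<m. lam ^ i)"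
        using lam0 lam1 by (intro sum_mono) (simp add: power_decreasing)
      also have "\<dots> = (1 - lam ^ m) / (1 - lam)" using lam1 by (simp add: sum_gp_strict)
      also have "\<dots> \<le> 1 / (1 - lam)" using lam0 lam1 by (intro divide_right_mono) auto
      finally show "(\<Sum>i<m. lam ^ Suc i) \<le> 1 / (1 - lam)" .
    qed (use H_pos lam0 in auto)
    finally show ?thesis by (simp add: field_simps)
  qed
  ultimately show ?thesis by blast
qed

end

theorem mainTheorem5:
  fixes Mt :: "nat \<Rightarrow> nat \<Rightarrow> bool" and F :: "nat set" and K0 :: nat
    and lam :: real and A :: "seq \<Rightarrow> real" and H :: real
  assumes lam: "0 < lam" "lam < 1"
    and prim: "primitive Mt F K0"
    and bdd_above: "bdd_above (A ` Sigma Mt)"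
    and H_pos: "H > 0"
    and holder: "\<And>k x y. k \<ge> 1 \<Longrightarrow> x \<in> Sigma Mt \<Longrightarrow> y \<in> Sigma Mt \<Longrightarrow>
                   dist_sh lam x y \<le> lam ^ k \<Longrightarrow> A x - A y \<le> H * lam ^ k"
    and inf_F: "bdd_below (A ` {x \<in> Sigma Mt. x 0 \<in> F})"
  shows "(\<forall>x\<in>Sigma Mt.
           0 \<le> uA Mt A x \<and>
           uA Mt A x \<le> ereal (max (Var Mt lam A + real K0 * (Sup (A ` Sigma Mt) - Inf (A ` {z \<in> Sigma Mt. z 0 \<in> F})))
                                   (real K0 * (Sup (A ` Sigma Mt) - beta Mt A))))
    \<and> (\<forall>x\<in>Sigma Mt. A x + real_of_ereal (uA Mt A x) - real_of_ereal (uA Mt A (shift x)) \<le> beta Mt A)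
    \<and> (\<forall>k\<ge>1. \<forall>x\<in>Sigma Mt. \<forall>y\<in>Sigma Mt. dist_sh lam x y \<le> lam ^ k \<longrightarrow>
           real_of_ereal (uA Mt A x) - real_of_ereal (uA Mt A y) \<le> H / (1 - lam) * lam ^ k)"
proof -
  interpret setting Mt lam A H using lam H_pos holder by unfold_locales auto
  define b where "b = beta Mt A"
  define IF where "IF = Inf (A ` {z \<in> Sigma Mt. z 0 \<in> F})"
  define SA where "SA = Sup (A ` Sigma Mt)"
  define Bd where "Bd = max (Var Mt lam A + real K0 * (SA - IF)) (real K0 * (SA - b))"
  define f where "f = (\<lambda>z. A z - b)"
  have uA_eq: "uA Mt A x = Sup {ereal (Ssum k f y) | k y. y \<in> Sigma Mt \<and> (shift ^^ k) y = x}" for x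
    by (simp add: uA_def f_def b_def)
  have uA_ge: "ereal (Ssum k f y) \<le> uA Mt A x" if "y \<in> Sigma Mt" "(shift ^^ k) y = x" for k y x
    unfolding uA_eq by (rule Sup_upper) (use that in blast)
  have uA_le: "uA Mt A x \<le> ereal c" if "\<And>k y. y \<in> Sigma Mt \<Longrightarrow> (shift ^^ k) y = x \<Longrightarrow> Ssum k f y \<le> c" for x c
    unfolding uA_eq by (rule Sup_least) (use that in auto)
  have fin: "0 \<le> uA Mt A x \<and> uA Mt A x \<le> ereal Bd" if x: "x \<in> Sigma Mt" for x
  proof -
    obtain p where p: "p \<in> Sigma Mt" "(shift ^^ (1 + K0)) p = p"
      using periodic_constr[OF prim x, of 1] by auto
    have bS: "b \<le> SA" unfolding b_def SA_def
      by (rule beta_le_sup[OF periodic_in[OF p(1) _ p(2)] bdd_above]) simp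
    have "0 \<le> real K0 * (SA - b)" using bS by simp
    then have "0 \<le> Bd" unfolding Bd_def by (rule max.coboundedI2)
    have "Ssum k f y \<le> Bd" if "y \<in> Sigma Mt" "(shift ^^ k) y = x" for k y
    proof (cases "k = 0")
      case True then show ?thesis using \<open>0 \<le> Bd\<close> by (simp add: Ssum_def)
    next
      case False
      then have "Ssum k f y \<le> Var Mt lam A + K0 * (b - IF)"
        unfolding f_def b_def IF_def by (intro bound_Ssum[OF prim bdd_above inf_F that(1)]) simp
      also have "\<dots> \<le> Var Mt lam A + K0 * (SA - IF)" using bS by (simp add: mult_left_mono)
      also have "\<dots> \<le> Bd" by (simp add: Bd_def)
      finally show ?thesis .
    qed
    then have "uA Mt A x \<le> ereal Bd" by (rule uA_le)
    moreover have "ereal (Ssum 0 f x) \<le> uA Mt A x" by (rule uA_ge[OF x]) simp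
    ultimately show ?thesis by (simp add: Ssum_def zero_ereal_def)
  qed
  have real_u: "uA Mt A x = ereal (real_of_ereal (uA Mt A x))" if "x \<in> Sigma Mt" for x
    using fin[OF that] by (intro ereal_real'[symmetric]) auto
  have P1: "\<forall>x\<in>Sigma Mt. 0 \<le> uA Mt A x \<and>
           uA Mt A x \<le> ereal (max (Var Mt lam A + real K0 * (Sup (A ` Sigma Mt) - Inf (A ` {z \<in> Sigma Mt. z 0 \<in> F})))
                                   (real K0 * (Sup (A ` Sigma Mt) - beta Mt A)))"
    using fin unfolding Bd_def SA_def IF_def b_def by blast
  have P2: "A x + real_of_ereal (uA Mt A x) - real_of_ereal (uA Mt A (shift x)) \<le> beta Mt A"
    if x: "x \<in> Sigma Mt" for x
  proof -
    have sx: "shift x \<in> Sigma Mt" using Sigma_shift[OF x, of 1] by (simp add: shift_def)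
    have "uA Mt A x \<le> ereal (real_of_ereal (uA Mt A (shift x)) - f x)"
    proof (rule uA_le)
      fix k y assume y: "y \<in> Sigma Mt" "(shift ^^ k) y = x"
      have "(shift ^^ Suc k) y = shift x" using y by simp
      then have "ereal (Ssum (Suc k) f y) \<le> uA Mt A (shift x)" by (rule uA_ge[OF y(1)])
      then have "Ssum (Suc k) f y \<le> real_of_ereal (uA Mt A (shift x))"
        using real_u[OF sx] by (metis ereal_less_eq(3))
      then show "Ssum k f y \<le> real_of_ereal (uA Mt A (shift x)) - f x"
        using y by (simp add: Ssum_Suc)
    qed
    then have "real_of_ereal (uA Mt A x) \<le> real_of_ereal (uA Mt A (shift x)) - f x"
      using real_u[OF x] by (metis ereal_less_eq(3))
    then show ?thesis by (simp add: f_def b_def)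
  qed
  have P3: "real_of_ereal (uA Mt A x) - real_of_ereal (uA Mt A y) \<le> H / (1 - lam) * lam ^ k"
    if k: "k \<ge> 1" and x: "x \<in> Sigma Mt" and y: "y \<in> Sigma Mt" and d: "dist_sh lam x y \<le> lam ^ k" for k x y
  proof -
    have ag: "\<forall>i<k. x i = y i" using dist_agree[OF lam d] by blast
    have "uA Mt A x \<le> ereal (real_of_ereal (uA Mt A y) + H / (1 - lam) * lam ^ k)"
    proof (rule uA_le)
      fix m z assume z: "z \<in> Sigma Mt" "(shift ^^ m) z = x"
      obtain z' where z': "z' \<in> Sigma Mt" "(shift ^^ m) z' = y"
        "Ssum m (\<lambda>w. A w - b) z \<le> Ssum m (\<lambda>w. A w - b) z' + H / (1 - lam) * lam ^ k"
        using shift_bound[OF y k ag z(1) z(2), of b] by blast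
      have "ereal (Ssum m f z') \<le> uA Mt A y" by (rule uA_ge[OF z'(1,2)])
      then have "Ssum m f z' \<le> real_of_ereal (uA Mt A y)"
        using real_u[OF y] by (metis ereal_less_eq(3))
      then show "Ssum m f z \<le> real_of_ereal (uA Mt A y) + H / (1 - lam) * lam ^ k"
        using z'(3) unfolding f_def by linarith
    qed
    then have "real_of_ereal (uA Mt A x) \<le> real_of_ereal (uA Mt A y) + H / (1 - lam) * lam ^ k"
      using real_u[OF x] by (metis ereal_less_eq(3))
    then show ?thesis by simp
  qed
  show ?thesis using P1 P2 P3 by blast
qed

end
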